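(* There are constants $c_0,c_1,c_2\geq 1$ such that the following holds. There is an infinite set $K$ of integers $k\geq c_0$ such that for each $k\in K$ there is a class $\mathcal{G}_k$ of graphs, each of treewidth at most $k$, such that for every $G\in\mathcal{G}_k$ and every $V\subseteq V(G)$ with $|V|\geq k^{c_1}$, the partial matching width of $V$ in $G$ is at least $(k\log|V|)/c_2$.
   Context: All graphs are finite and simple; $\log$ is the binary logarithm. Partial matching width: for a graph $G$ and $V\subseteq V(G)$, the partial matching width of $V$ (with respect to $G$) is the largest integer $k\geq 0$ such that for every ordering $(v_1,\dots,v_m)$ of the elements of $V$ there is an index $j\in\{0,\dots,m\}$ such that $G$ has a matching of size at least $k$ each of whose edges has one endpoint in the prefix set $\{v_1,\dots,v_j\}$ and the other endpoint in $V(G)\setminus\{v_1,\dots,v_j\}$. *)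

theory Defs
  imports Complex_Main
begin

type_synonym graph = "nat set \<times> nat set set"

definition verts :: "graph \<Rightarrow> nat set" where "verts G = fst G"
definition edges :: "graph \<Rightarrow> nat set set" where "edges G = snd G"

definition simple_graph :: "graph \<Rightarrow> bool" where
  "simple_graph G \<longleftrightarrow> finite (verts G) \<and> (\<forall>e\<in>edges G. e \<subseteq> verts G \<and> card e = 2)"

definition adj :: "graph \<Rightarrow> nat \<Rightarrow> nat \<Rightarrow> bool" where
  "adj G u v \<longleftrightarrow> {u, v} \<in> edges G"

definition connected_in :: "graph \<Rightarrow> nat set \<Rightarrow> bool" where
  "connected_in G S \<longleftrightarrow>
     (\<forall>u\<in>S. \<forall>v\<in>S. (\<lambda>x y. x \<in> S \<and> y \<in> S \<and> adj G x y)\<^sup>*\<^sup>* u v)"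

definition is_cycle :: "graph \<Rightarrow> nat list \<Rightarrow> bool" where
  "is_cycle G cs \<longleftrightarrow> length cs \<ge> 3 \<and> distinct cs \<and> set cs \<subseteq> verts G \<and>
     (\<forall>i < length cs - 1. adj G (cs ! i) (cs ! (i + 1))) \<and> adj G (last cs) (hd cs)"

definition is_tree :: "graph \<Rightarrow> bool" where
  "is_tree T \<longleftrightarrow> simple_graph T \<and> verts T \<noteq> {} \<and> connected_in T (verts T) \<and>
     (\<nexists>cs. is_cycle T cs)"

definition tree_decomposition :: "graph \<Rightarrow> graph \<Rightarrow> (nat \<Rightarrow> nat set) \<Rightarrow> bool" where
  "tree_decomposition G T bag \<longleftrightarrow> is_tree T \<and>
     (\<forall>t\<in>verts T. bag t \<subseteq> verts G) \<and>
     (\<forall>v\<in>verts G. \<exists>t\<in>verts T. v \<in> bag t) \<and>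
     (\<forall>e\<in>edges G. \<exists>t\<in>verts T. e \<subseteq> bag t) \<and>
     (\<forall>v\<in>verts G. connected_in T {t \<in> verts T. v \<in> bag t})"

definition decomposition_width :: "graph \<Rightarrow> (nat \<Rightarrow> nat set) \<Rightarrow> nat" where
  "decomposition_width T bag = Max ((\<lambda>t. card (bag t)) ` verts T) - 1"

definition treewidth :: "graph \<Rightarrow> nat" where
  "treewidth G = (LEAST w. \<exists>T bag. tree_decomposition G T bag \<and> decomposition_width T bag = w)"

definition crossing_matching :: "graph \<Rightarrow> nat set \<Rightarrow> nat set set \<Rightarrow> bool" where
  "crossing_matching G S M \<longleftrightarrow> M \<subseteq> edges G \<and>
     (\<forall>e1\<in>M. \<forall>e2\<in>M. e1 \<noteq> e2 \<longrightarrow> e1 \<inter> e2 = {}) \<and>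
     (\<forall>e\<in>M. \<exists>x y. e = {x, y} \<and> x \<in> S \<and> y \<in> verts G - S)"

definition pmw :: "graph \<Rightarrow> nat set \<Rightarrow> nat" where
  "pmw G V = (GREATEST k. \<forall>vs. distinct vs \<and> set vs = V \<longrightarrow>
      (\<exists>j \<le> length vs. \<exists>M. crossing_matching G (set (take j vs)) M \<and> card M \<ge> k))"

end

theory Submission
  imports Defs "HOL-Library.Infinite_Set"
begin


definition pairing :: "graph \<Rightarrow> nat set \<Rightarrow> nat set \<Rightarrow> (nat \<Rightarrow> nat) \<Rightarrow> bool" where
  "pairing G S A f \<longleftrightarrow> finite A \<and> A \<subseteq> S \<and> inj_on f A \<and>
     (\<forall>a\<in>A. f a \<in> verts G - S \<and> {a, f a} \<in> edges G)"

lemma pairing_matching: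
  assumes "pairing G S A f"
  shows "crossing_matching G S ((\<lambda>a. {a, f a}) ` A) \<and> card ((\<lambda>a. {a, f a}) ` A) = card A"
proof -
  have inj: "inj_on (\<lambda>a. {a, f a}) A"
  proof (rule inj_onI)
    fix x y assume x: "x \<in> A" and y: "y \<in> A" and e: "{x, f x} = {y, f y}"
    have "x \<in> S" "y \<in> S" "f x \<notin> S" "f y \<notin> S" using assms x y unfolding pairing_def by auto
    then show "x = y" using e by (metis doubleton_eq_iff)
  qed
  have cm: "crossing_matching G S ((\<lambda>a. {a, f a}) ` A)"
    unfolding crossing_matching_def
  proof (intro conjI ballI impI)
    show "(\<lambda>a. {a, f a}) ` A \<subseteq> edges G" using assms unfolding pairing_def by auto
  next
    fix e1 e2 assume "e1 \<in> (\<lambda>a. {a, f a}) ` A" "e2 \<in> (\<lambda>a. {a, f a}) ` A" "e1 \<noteq> e2"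
    then obtain x y where x: "x \<in> A" "e1 = {x, f x}" and y: "y \<in> A" "e2 = {y, f y}" by auto
    have "x \<noteq> y" using x y \<open>e1 \<noteq> e2\<close> by auto
    hence "f x \<noteq> f y" using assms x y unfolding pairing_def inj_on_def by auto
    moreover have "x \<in> S" "y \<in> S" "f x \<notin> S" "f y \<notin> S" using assms x y unfolding pairing_def by auto
    ultimately show "e1 \<inter> e2 = {}" using x y \<open>x \<noteq> y\<close> by auto
  next
    fix e assume "e \<in> (\<lambda>a. {a, f a}) ` A"
    then obtain x where x: "x \<in> A" "e = {x, f x}" by auto
    then show "\<exists>x y. e = {x, y} \<and> x \<in> S \<and> y \<in> verts G - S" using assms unfolding pairing_def by auto
  qed
  show ?thesis using cm card_image[OF inj] by auto
qed

lemma crossing_card_bound: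
  assumes "simple_graph G" "crossing_matching G S M"
  shows "card M \<le> card (edges G)"
proof -
  have "finite (verts G)" using assms unfolding simple_graph_def by auto
  hence "finite (Pow (verts G))" by auto
  moreover have "edges G \<subseteq> Pow (verts G)" using assms unfolding simple_graph_def by auto
  ultimately have "finite (edges G)" by (rule finite_subset[rotated])
  thus ?thesis using assms unfolding crossing_matching_def by (auto intro: card_mono)
qed

lemma pmw_ge:
  assumes sg: "simple_graph G" and fin: "finite V"
    and H: "\<And>vs. distinct vs \<Longrightarrow> set vs = V \<Longrightarrow>
        \<exists>j \<le> length vs. \<exists>A f. pairing G (set (take j vs)) A f \<and> card A \<ge> w"
  shows "w \<le> pmw G V"
  unfolding pmw_def
proof (rule Greatest_le_nat)
  show "\<forall>vs. distinct vs \<and> set vs = V \<longrightarrow>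
      (\<exists>j \<le> length vs. \<exists>M. crossing_matching G (set (take j vs)) M \<and> card M \<ge> w)"
  proof (intro allI impI)
    fix vs assume "distinct vs \<and> set vs = V"
    then obtain j A f where "j \<le> length vs" "pairing G (set (take j vs)) A f" "card A \<ge> w"
      using H by blast
    then show "\<exists>j \<le> length vs. \<exists>M. crossing_matching G (set (take j vs)) M \<and> card M \<ge> w"
      using pairing_matching by metis
  qed
next
  fix y
  assume a: "\<forall>vs. distinct vs \<and> set vs = V \<longrightarrow>
      (\<exists>j \<le> length vs. \<exists>M. crossing_matching G (set (take j vs)) M \<and> card M \<ge> y)"
    obtain vs where "distinct vs" "set vs = V" using fin finite_distinct_list by blast
    then obtain j M where "crossing_matching G (set (take j vs)) M" "card M \<ge> y" using a by blast
    then show "y \<le> card (edges G)" using crossing_card_bound[OF sg] by (meson le_trans)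
qed



definition nadj :: "nat \<Rightarrow> nat \<Rightarrow> bool" where
  "nadj x y \<longleftrightarrow> x = y \<or> x = y div 2 \<or> y = x div 2"

definition BV :: "nat \<Rightarrow> nat \<Rightarrow> nat set" where
  "BV b N = {v. b \<le> v \<and> v < N * b}"

definition BE :: "nat \<Rightarrow> nat \<Rightarrow> nat set set" where
  "BE b N = {e. \<exists>u v. e = {u, v} \<and> u \<in> BV b N \<and> v \<in> BV b N \<and> u \<noteq> v \<and> nadj (u div b) (v div b)}"

definition BG :: "nat \<Rightarrow> nat \<Rightarrow> graph" where
  "BG b N = (BV b N, BE b N)"

definition blob :: "nat \<Rightarrow> nat \<Rightarrow> nat set" where
  "blob b x = {v. v div b = x}"

lemma verts_BG[simp]: "verts (BG b N) = BV b N" by (simp add: BG_def verts_def)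
lemma edges_BG[simp]: "edges (BG b N) = BE b N" by (simp add: BG_def edges_def)

lemma simple_BG: "simple_graph (BG b N)"
proof -
  have "BV b N \<subseteq> {..<N*b}" unfolding BV_def by auto
  hence "finite (BV b N)" using finite_subset by blast
  moreover have "\<forall>e\<in>BE b N. e \<subseteq> BV b N \<and> card e = 2"
  proof
    fix e assume "e \<in> BE b N"
    then obtain u v where "e = {u, v}" "u \<in> BV b N" "v \<in> BV b N" "u \<noteq> v" unfolding BE_def by blast
    thus "e \<subseteq> BV b N \<and> card e = 2" by simp
  qed
  ultimately show ?thesis unfolding simple_graph_def by simp
qed

lemma blob_mem: assumes "0 < b" shows "v \<in> blob b x \<longleftrightarrow> x * b \<le> v \<and> v < x * b + b"
proof
  assume "v \<in> blob b x"
  hence v: "v div b = x" unfolding blob_def by simp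
  have "x * b \<le> v" using v div_times_less_eq_dividend[of v b] by simp
  moreover have "v < x * b + b"
  proof -
    have "v = x * b + v mod b" using v div_mult_mod_eq[of v b] by simp
    moreover have "v mod b < b" using assms by simp
    ultimately show ?thesis by linarith
  qed
  ultimately show "x * b \<le> v \<and> v < x * b + b" by simp
next
  assume "x * b \<le> v \<and> v < x * b + b"
  hence "b * x \<le> v" "v < b * Suc x" by (simp_all add: mult.commute)
  hence "v div b = x" by (rule div_nat_eqI)
  thus "v \<in> blob b x" unfolding blob_def by simp
qed

lemma blob_eq: assumes "0 < b" shows "blob b x = {x*b..<x*b+b}"
  using blob_mem[OF assms] by auto

lemma blob_fin[simp]: "0 < b \<Longrightarrow> finite (blob b x)" by (simp add: blob_eq)
lemma blob_card[simp]: "0 < b \<Longrightarrow> card (blob b x) = b" by (simp add: blob_eq)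

lemma BV_iff: assumes "0 < b" shows "v \<in> BV b N \<longleftrightarrow> 1 \<le> v div b \<and> v div b < N"
  unfolding BV_def mem_Collect_eq less_eq_div_iff_mult_less_eq[OF assms] div_less_iff_less_mult[OF assms] by simp

lemma blob_BV: "0 < b \<Longrightarrow> 1 \<le> x \<Longrightarrow> x < N \<Longrightarrow> blob b x \<subseteq> BV b N"
  using BV_iff unfolding blob_def by auto

lemma BE_I: "u \<in> BV b N \<Longrightarrow> v \<in> BV b N \<Longrightarrow> u \<noteq> v \<Longrightarrow> nadj (u div b) (v div b) \<Longrightarrow> {u, v} \<in> BE b N"
  unfolding BE_def by blast


lemma pairing_union:
  assumes "pairing G S A1 f1" "pairing G S A2 f2" "A1 \<inter> A2 = {}" "f1 ` A1 \<inter> f2 ` A2 = {}"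
  shows "pairing G S (A1 \<union> A2) (\<lambda>a. if a \<in> A1 then f1 a else f2 a)
     \<and> card (A1 \<union> A2) = card A1 + card A2"
proof -
  have f: "finite A1" "finite A2" using assms unfolding pairing_def by auto
  have "inj_on (\<lambda>a. if a \<in> A1 then f1 a else f2 a) (A1 \<union> A2)"
  proof (rule inj_onI)
    fix x y assume xy: "x \<in> A1 \<union> A2" "y \<in> A1 \<union> A2"
      and e: "(if x \<in> A1 then f1 x else f2 x) = (if y \<in> A1 then f1 y else f2 y)"
    have i1: "inj_on f1 A1" and i2: "inj_on f2 A2" using assms unfolding pairing_def by auto
    show "x = y"
    proof (cases "x \<in> A1")
      case True
      show ?thesis
      proof (cases "y \<in> A1")
        case True then show ?thesis using \<open>x \<in> A1\<close> e i1 unfolding inj_on_def by auto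
      next
        case False
        then have "y \<in> A2" using xy by auto
        then have "f1 x \<in> f1 ` A1 \<inter> f2 ` A2" using e \<open>x \<in> A1\<close> False by (metis IntI image_eqI)
        then show ?thesis using assms(4) by blast
      qed
    next
      case False
      then have x2: "x \<in> A2" using xy by auto
      show ?thesis
      proof (cases "y \<in> A1")
        case True
        then have "f1 y \<in> f1 ` A1 \<inter> f2 ` A2" using e x2 False by (metis IntI image_eqI)
        then show ?thesis using assms(4) by blast
      next
        case F2: False
        then have "y \<in> A2" using xy by auto
        then show ?thesis using x2 e False F2 i2 unfolding inj_on_def by auto
      qed
    qed
  qed
  then show ?thesis using assms f card_Un_disjoint unfolding pairing_def by auto
qed

lemma pairing_empty: "pairing G S {} f" unfolding pairing_def by auto

lemma blob_pairing:
  assumes b: "0 < b" and fQ: "finite Q" and ig: "inj_on g Q"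
    and nd: "\<And>u. u \<in> Q \<Longrightarrow> nadj u (g u) \<and> 1 \<le> u \<and> u < N \<and> 1 \<le> g u \<and> g u < N"
    and As: "\<And>u. u \<in> Q \<Longrightarrow> A u \<subseteq> blob b u \<inter> S"
    and Ac: "\<And>u. u \<in> Q \<Longrightarrow> card (A u) \<le> card (blob b (g u) - S)"
  shows "\<exists>f. pairing (BG b N) S (\<Union>u\<in>Q. A u) f \<and> card (\<Union>u\<in>Q. A u) = (\<Sum>u\<in>Q. card (A u))
     \<and> (\<forall>a \<in> (\<Union>u\<in>Q. A u). f a \<in> blob b (g (a div b)))"
proof -
  have "\<forall>u\<in>Q. \<exists>h. inj_on h (A u) \<and> h ` A u \<subseteq> blob b (g u) - S"
  proof
    fix u assume u: "u \<in> Q"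
    have "finite (A u)" using As[OF u] b by (meson blob_fin finite_Int finite_subset)
    thus "\<exists>h. inj_on h (A u) \<and> h ` A u \<subseteq> blob b (g u) - S"
      using card_le_inj[of "A u" "blob b (g u) - S"] Ac[OF u] b by auto
  qed
  then obtain h where h: "\<forall>u\<in>Q. inj_on (h u) (A u) \<and> h u ` A u \<subseteq> blob b (g u) - S"
    using bchoice[of Q "\<lambda>u h. inj_on h (A u) \<and> h ` A u \<subseteq> blob b (g u) - S"] by blast
  hence h: "\<And>u. u \<in> Q \<Longrightarrow> inj_on (h u) (A u) \<and> h u ` A u \<subseteq> blob b (g u) - S" by blast
  define f where "f a = h (a div b) a" for a
  let ?A = "\<Union>u\<in>Q. A u"
  have node: "a div b = u" if "a \<in> A u" "u \<in> Q" for a u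
    using As[OF that(2)] that(1) unfolding blob_def by auto
  have fA: "f a \<in> blob b (g u) - S" if "a \<in> A u" "u \<in> Q" for a u
    using h[OF that(2)] node[OF that] that unfolding f_def by auto
  have finA: "finite (A u)" if "u \<in> Q" for u
    using As[OF that] b by (meson blob_fin finite_Int finite_subset)
  have disj: "A u \<inter> A u' = {}" if "u \<in> Q" "u' \<in> Q" "u \<noteq> u'" for u u'
    using node that by blast
  have pr: "pairing (BG b N) S ?A f"
    unfolding pairing_def
  proof (intro conjI ballI)
    show "finite ?A" using fQ finA by auto
    show "?A \<subseteq> S" using As by auto
    show "inj_on f ?A"
    proof (rule inj_onI)
      fix x y assume "x \<in> ?A" "y \<in> ?A" "f x = f y"
      then obtain u v where u: "u \<in> Q" "x \<in> A u" and v: "v \<in> Q" "y \<in> A v" by auto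
      have "f x div b = g u" "f y div b = g v" using fA[OF u(2,1)] fA[OF v(2,1)] unfolding blob_def by auto
      hence "g u = g v" using \<open>f x = f y\<close> by simp
      hence "u = v" using ig u v unfolding inj_on_def by auto
      thus "x = y" using h[OF u(1)] u v \<open>f x = f y\<close> node[OF u(2,1)] node[OF v(2,1)]
        unfolding f_def inj_on_def by auto
    qed
  next
    fix a assume "a \<in> ?A"
    then obtain u where u: "u \<in> Q" "a \<in> A u" by auto
    have fa: "f a \<in> blob b (g u)" "f a \<notin> S" using fA[OF u(2,1)] by auto
    have a: "a \<in> blob b u" "a \<in> S" using As[OF u(1)] u by auto
    have "f a \<in> BV b N" using blob_BV[OF b, of "g u" N] nd[OF u(1)] fa by auto
    moreover have "a \<in> BV b N" using blob_BV[OF b, of u N] nd[OF u(1)] a by auto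
    moreover have "nadj (a div b) (f a div b)" using a fa nd[OF u(1)] unfolding blob_def by auto
    moreover have "a \<noteq> f a" using a fa by auto
    ultimately show "f a \<in> verts (BG b N) - S" "{a, f a} \<in> edges (BG b N)"
      using fa BE_I[of a b N "f a"] by auto
  qed
  have "card ?A = (\<Sum>u\<in>Q. card (A u))"
    by (rule card_UN_disjoint[OF fQ]) (use finA disj in auto)
  moreover have "\<forall>a \<in> ?A. f a \<in> blob b (g (a div b))" using fA node by auto
  ultimately show ?thesis using pr by blast
qed



definition TT :: "nat \<Rightarrow> graph" where
  "TT N = ({1..<N}, {e. \<exists>z. 2 \<le> z \<and> z < N \<and> e = {z, z div 2}})"

definition bagf :: "nat \<Rightarrow> nat \<Rightarrow> nat \<Rightarrow> nat set" where
  "bagf b N t = {v \<in> BV b N. v div b = t \<or> v div b = t div 2}"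

lemma verts_TT[simp]: "verts (TT N) = {1..<N}" by (simp add: TT_def verts_def)
lemma edges_TT: "edges (TT N) = {e. \<exists>z. 2 \<le> z \<and> z < N \<and> e = {z, z div 2}}" by (simp add: TT_def edges_def)

lemma adj_TT: "adj (TT N) x y \<longleftrightarrow> (2 \<le> x \<and> x < N \<and> y = x div 2) \<or> (2 \<le> y \<and> y < N \<and> x = y div 2)"
  unfolding adj_def edges_TT by (auto simp: doubleton_eq_iff)

lemma simple_TT: "simple_graph (TT N)"
  unfolding simple_graph_def edges_TT by auto

lemma conn_TT:
  assumes "2 \<le> N"
  shows "connected_in (TT N) {1..<N}"
proof -
  let ?R = "\<lambda>x y. x \<in> {1..<N} \<and> y \<in> {1..<N} \<and> adj (TT N) x y"
  have up: "?R\<^sup>*\<^sup>* x 1 \<and> ?R\<^sup>*\<^sup>* 1 x" if "x \<in> {1..<N}" for x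
    using that
  proof (induction x rule: less_induct)
    case (less x)
    show ?case
    proof (cases "x = 1")
      case True then show ?thesis by simp
    next
      case False
      hence x2: "2 \<le> x" "x < N" using less.prems by auto
      hence p: "x div 2 \<in> {1..<N}" "x div 2 < x" by auto
      have r1: "?R x (x div 2)" "?R (x div 2) x" using x2 p by (auto simp: adj_TT)
      have ih: "?R\<^sup>*\<^sup>* (x div 2) 1" "?R\<^sup>*\<^sup>* 1 (x div 2)" using less.IH[OF p(2) p(1)] by auto
      have "?R\<^sup>*\<^sup>* x 1" by (rule converse_rtranclp_into_rtranclp[OF r1(1) ih(1)])
      moreover have "?R\<^sup>*\<^sup>* 1 x" by (rule rtranclp.rtrancl_into_rtrancl[OF ih(2) r1(2)])
      ultimately show ?thesis by simp
    qed
  qed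
  show ?thesis unfolding connected_in_def
  proof (intro ballI)
    fix u v assume "u \<in> {1..<N}" "v \<in> {1..<N}"
    then show "?R\<^sup>*\<^sup>* u v" using up by (meson rtranclp_trans)
  qed
qed

lemma nocycle_TT: "\<not> is_cycle (TT N) cs"
proof
  assume c: "is_cycle (TT N) cs"
  define n where "n = length cs"
  have n3: "n \<ge> 3" and dist: "distinct cs" using c unfolding is_cycle_def n_def by auto
  have step: "adj (TT N) (cs ! i) (cs ! ((i + 1) mod n))" if "i < n" for i
  proof (cases "i = n - 1")
    case True
    have "cs \<noteq> []" using n3 n_def by auto
    hence "last cs = cs ! i" using True n3 by (simp add: last_conv_nth n_def)
    moreover have "hd cs = cs ! 0" using \<open>cs \<noteq> []\<close> by (simp add: hd_conv_nth)
    moreover have "(i + 1) mod n = 0" using True n3 by simp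
    ultimately show ?thesis using c unfolding is_cycle_def by simp
  next
    case False
    hence "i < length cs - 1" using that n_def by simp
    moreover have "(i + 1) mod n = i + 1" using False that by simp
    ultimately show ?thesis using c unfolding is_cycle_def by simp
  qed
  have sym: "adj (TT N) x y \<Longrightarrow> adj (TT N) y x" for x y by (auto simp: adj_TT)
  have fin: "finite (set cs)" "set cs \<noteq> {}" using n3 n_def by auto
  define m where "m = Max (set cs)"
  have "m \<in> set cs" using fin m_def by simp
  then obtain p where p: "p < n" "cs ! p = m" unfolding in_set_conv_nth n_def by blast
  define q where "q = (p + n - 1) mod n"
  define r where "r = (p + 1) mod n"
  have n0: "0 < n" using n3 by simp
  have qn: "q < n" "r < n" unfolding q_def r_def using mod_less_divisor[OF n0] by blast+
  have qp: "(q + 1) mod n = p"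
  proof (cases "p = 0")
    case True
    hence "p + n - 1 = n - 1" by simp
    moreover have "n - 1 < n" using n0 by simp
    ultimately have "q = n - 1" unfolding q_def by (simp only: mod_less)
    hence "q + 1 = n" using n0 by simp
    thus ?thesis using True by simp
  next
    case False
    hence "p + n - 1 = (p - 1) + n" by simp
    hence "q = (p - 1) mod n" unfolding q_def by (simp only: mod_add_self2)
    moreover have "p - 1 < n" using p by simp
    ultimately have "q = p - 1" by simp
    hence "q + 1 = p" using False by simp
    thus ?thesis using p by simp
  qed
  have neq1: "q \<noteq> p"
  proof
    assume "q = p"
    hence e: "(p + 1) mod n = p" using qp by simp
    show False
    proof (cases "p + 1 < n")
      case True then show False using e by simp
    next
      case False
      hence "p + 1 = n" using p by simp
      then show False using e n3 by simp
    qed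
  qed
  have neq2: "r \<noteq> p"
  proof
    assume "r = p"
    hence e: "(p + 1) mod n = p" by (simp add: r_def)
    show False
    proof (cases "p + 1 < n")
      case True then show False using e by simp
    next
      case False
      hence "p + 1 = n" using p by simp
      then show False using e n3 by simp
    qed
  qed
  have neq3: "q \<noteq> r"
  proof
    assume "q = r"
    hence e1: "(r + 1) mod n = p" using qp by simp
    show False
    proof (cases "p + 1 < n")
      case True
      hence "r = p + 1" by (simp add: r_def)
      hence e: "(p + 2) mod n = p" using e1 by simp
      show False
      proof (cases "p + 2 < n")
        case True then show False using e by simp
      next
        case False
        hence "p + 2 = n" using \<open>p + 1 < n\<close> by simp
        then show False using e n3 by simp
      qed
    next
      case False
      hence "p + 1 = n" using p by simp
      hence "r = 0" by (simp add: r_def)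
      hence "1 mod n = p" using e1 by simp
      thus False using n3 \<open>p + 1 = n\<close> by simp
    qed
  qed
  note neq = neq1 neq2 neq3
  have lt: "cs ! i < m" if "i < n" "i \<noteq> p" for i
  proof -
    have "cs ! i \<in> set cs" using that n_def by simp
    hence "cs ! i \<le> m" using fin m_def by simp
    moreover have "cs ! i \<noteq> m" using nth_eq_iff_index_eq[OF dist, of i p] p that n_def by simp
    ultimately show ?thesis by simp
  qed
  have par: "y = m div 2" if "adj (TT N) m y" "y < m" for y
    using that by (auto simp: adj_TT)
  have "adj (TT N) (cs ! q) (cs ! ((q + 1) mod n))" using step[OF qn(1)] .
  hence "adj (TT N) (cs ! q) m" using qp p(2) by simp
  hence a1: "adj (TT N) m (cs ! q)" by (rule sym)
  have "cs ! q = m div 2" by (rule par[OF a1 lt[OF qn(1) neq(1)]])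
  moreover have "adj (TT N) (cs ! p) (cs ! ((p + 1) mod n))" using step[OF p(1)] .
  hence a2: "adj (TT N) m (cs ! r)" using p(2) by (simp add: r_def)
  have "cs ! r = m div 2" by (rule par[OF a2 lt[OF qn(2) neq(2)]])
  ultimately have "cs ! q = cs ! r" by simp
  thus False using nth_eq_iff_index_eq[OF dist, of q r] neq(3) qn n_def by simp
qed

lemma tree_TT: "2 \<le> N \<Longrightarrow> is_tree (TT N)"
  unfolding is_tree_def using simple_TT conn_TT nocycle_TT by auto

lemma td_BG:
  assumes b: "0 < b" and N: "2 \<le> N"
  shows "tree_decomposition (BG b N) (TT N) (bagf b N)"
  unfolding tree_decomposition_def
proof (intro conjI)
  show "is_tree (TT N)" using tree_TT[OF N] .
  show "\<forall>t\<in>verts (TT N). bagf b N t \<subseteq> verts (BG b N)" unfolding bagf_def by auto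
  show "\<forall>v\<in>verts (BG b N). \<exists>t\<in>verts (TT N). v \<in> bagf b N t"
  proof
    fix v assume v: "v \<in> verts (BG b N)"
    hence "v div b \<in> {1..<N}" using BV_iff[OF b] by auto
    moreover have "v \<in> bagf b N (v div b)" using v unfolding bagf_def by auto
    ultimately show "\<exists>t\<in>verts (TT N). v \<in> bagf b N t" by auto
  qed
  show "\<forall>e\<in>edges (BG b N). \<exists>t\<in>verts (TT N). e \<subseteq> bagf b N t"
  proof
    fix e assume "e \<in> edges (BG b N)"
    then obtain u v where e: "e = {u, v}" "u \<in> BV b N" "v \<in> BV b N" "nadj (u div b) (v div b)"
      by (auto simp: BE_def)
    have ru: "u div b \<in> {1..<N}" and rv: "v div b \<in> {1..<N}" using e BV_iff[OF b] by auto
    consider "u div b = v div b" | "u div b = v div b div 2" | "v div b = u div b div 2"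
      using e(4) unfolding nadj_def by blast
    then show "\<exists>t\<in>verts (TT N). e \<subseteq> bagf b N t"
    proof cases
      case 1
      hence "e \<subseteq> bagf b N (u div b)" using e unfolding bagf_def by auto
      thus ?thesis using ru by auto
    next
      case 2
      hence "e \<subseteq> bagf b N (v div b)" using e unfolding bagf_def by auto
      thus ?thesis using rv by auto
    next
      case 3
      hence "e \<subseteq> bagf b N (u div b)" using e unfolding bagf_def by auto
      thus ?thesis using ru by auto
    qed
  qed
  show "\<forall>v\<in>verts (BG b N). connected_in (TT N) {t \<in> verts (TT N). v \<in> bagf b N t}"
  proof
    fix v assume v: "v \<in> verts (BG b N)"
    define x where "x = v div b"
    have rx: "x \<in> {1..<N}" using v BV_iff[OF b] x_def by auto
    define St where "St = {t \<in> verts (TT N). v \<in> bagf b N t}"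
    have St: "t \<in> St \<longleftrightarrow> t \<in> {1..<N} \<and> (t = x \<or> x = t div 2)" for t
      using v unfolding St_def bagf_def x_def by auto
    let ?R = "\<lambda>x y. x \<in> St \<and> y \<in> St \<and> adj (TT N) x y"
    have xS: "x \<in> St" using St rx by simp
    have both: "?R\<^sup>*\<^sup>* t x \<and> ?R\<^sup>*\<^sup>* x t" if t: "t \<in> St" for t
    proof (cases "t = x")
      case True then show ?thesis by simp
    next
      case False
      hence tx: "x = t div 2" "t \<in> {1..<N}" using St t by auto
      hence "2 \<le> t" using rx by auto
      hence "adj (TT N) t x" "adj (TT N) x t" using tx by (auto simp: adj_TT)
      hence "?R t x" "?R x t" using t xS by auto
      thus ?thesis by auto
    qed
    show "connected_in (TT N) {t \<in> verts (TT N). v \<in> bagf b N t}"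
      unfolding connected_in_def St_def[symmetric]
    proof (intro ballI)
      fix u w assume "u \<in> St" "w \<in> St"
      thus "?R\<^sup>*\<^sup>* u w" using both by (meson rtranclp_trans)
    qed
  qed
qed

lemma width_BG:
  assumes b: "0 < b" and N: "2 \<le> N"
  shows "decomposition_width (TT N) (bagf b N) \<le> 2 * b - 1"
proof -
  have "card (bagf b N t) \<le> 2 * b" for t
  proof -
    have "bagf b N t \<subseteq> blob b t \<union> blob b (t div 2)" unfolding bagf_def blob_def by auto
    hence "card (bagf b N t) \<le> card (blob b t \<union> blob b (t div 2))"
      using b by (intro card_mono) auto
    also have "... \<le> card (blob b t) + card (blob b (t div 2))" by (rule card_Un_le)
    finally show ?thesis using b by simp
  qed
  moreover have "finite ((\<lambda>t. card (bagf b N t)) ` verts (TT N))" by simp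
  moreover have "(\<lambda>t. card (bagf b N t)) ` verts (TT N) \<noteq> {}" using N by auto
  ultimately have "Max ((\<lambda>t. card (bagf b N t)) ` verts (TT N)) \<le> 2 * b" by auto
  thus ?thesis unfolding decomposition_width_def by simp
qed

lemma tw_BG:
  assumes b: "0 < b" and N: "2 \<le> N"
  shows "treewidth (BG b N) \<le> 2 * b - 1"
proof -
  have "treewidth (BG b N) \<le> decomposition_width (TT N) (bagf b N)"
    unfolding treewidth_def using td_BG[OF b N] by (intro Least_le) blast
  thus ?thesis using width_BG[OF b N] by simp
qed



definition pc :: "nat \<Rightarrow> nat list \<Rightarrow> nat \<Rightarrow> nat \<Rightarrow> nat" where
  "pc b vs t x = card (blob b x \<inter> set (take t vs))"

definition heavy :: "nat \<Rightarrow> nat list \<Rightarrow> nat \<Rightarrow> nat \<Rightarrow> bool" where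
  "heavy b vs t x \<longleftrightarrow> b < 2 * pc b vs t x"

definition Sub :: "nat \<Rightarrow> nat \<Rightarrow> nat set" where
  "Sub H y = {z. \<exists>i\<le>H. z div 2^i = y}"

definition Blobs :: "nat \<Rightarrow> nat set \<Rightarrow> nat set" where
  "Blobs b X = {v. v div b \<in> X}"

lemma pc_mono: "t \<le> t' \<Longrightarrow> pc b vs t x \<le> pc b vs t' x"
  unfolding pc_def
proof (rule card_mono)
  show "finite (blob b x \<inter> set (take t' vs))" by simp
  assume "t \<le> t'"
  thus "blob b x \<inter> set (take t vs) \<subseteq> blob b x \<inter> set (take t' vs)"
    using set_take_subset_set_take[of t t' vs] by auto
qed

lemma heavy_mono: "t \<le> t' \<Longrightarrow> heavy b vs t x \<Longrightarrow> heavy b vs t' x"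
  unfolding heavy_def using pc_mono[of t t' b vs x] by linarith

lemma heavy0: "\<not> heavy b vs 0 x"
  unfolding heavy_def pc_def by simp

lemma pc_step:
  assumes "t < length vs" "vs ! t div b \<noteq> x"
  shows "pc b vs (Suc t) x = pc b vs t x"
proof -
  have "set (take (Suc t) vs) = insert (vs ! t) (set (take t vs))"
    using assms(1) by (simp add: take_Suc_conv_app_nth)
  moreover have "vs ! t \<notin> blob b x" using assms(2) unfolding blob_def by simp
  ultimately have "blob b x \<inter> set (take (Suc t) vs) = blob b x \<inter> set (take t vs)" by auto
  thus ?thesis unfolding pc_def by simp
qed

lemma Sub_self: "y \<in> Sub H y"
  unfolding Sub_def by (rule CollectI, rule exI[of _ 0]) simp

lemma Sub_child: "1 \<le> H \<Longrightarrow> 2 * y \<in> Sub H y"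
  unfolding Sub_def by (rule CollectI, rule exI[of _ 1]) simp

lemma Sub_range:
  assumes "1 \<le> y" "(y + 1) * 2^H \<le> N" "z \<in> Sub H y"
  shows "1 \<le> z \<and> z < N"
proof -
  obtain i where i: "i \<le> H" "z div 2^i = y" using assms(3) unfolding Sub_def by auto
  have "z \<noteq> 0" using i assms(1) by (cases "z = 0") auto
  moreover have "z < (y + 1) * 2^i"
    using div_less_iff_less_mult[of "2^i" z "y+1"] i by simp
  moreover have "(y + 1) * 2^i \<le> (y + 1) * 2^H"
    using i(1) by (intro mult_le_mono2 power_increasing) auto
  ultimately show ?thesis using assms(2) by linarith
qed

lemma div_pow_add: "(z::nat) div 2^a div 2^c = z div 2^(a + c)"
  by (simp add: div_mult2_eq power_add)

lemma div_level_unique: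
  assumes "1 \<le> (y::nat)" "z div 2^a = y" "z div 2^c = y"
  shows "a = c"
proof (rule ccontr)
  assume "a \<noteq> c"
  then consider "a < c" | "c < a" by linarith
  then show False
  proof cases
    case 1
    have "z div 2^c = z div 2^a div 2^(c - a)" using div_pow_add[of z a "c - a"] 1 by simp
    hence "y div 2^(c-a) = y" using assms by simp
    moreover have "y div 2^(c - a) < y"
    proof (rule div_less_dividend)
      show "1 < (2::nat)^(c - a)" using 1 by (intro one_less_power) auto
    qed (use assms(1) in auto)
    ultimately show False by simp
  next
    case 2
    have "z div 2^a = z div 2^c div 2^(a - c)" using div_pow_add[of z c "a - c"] 2 by simp
    hence "y div 2^(a-c) = y" using assms by simp
    moreover have "y div 2^(a - c) < y"
    proof (rule div_less_dividend)
      show "1 < (2::nat)^(a - c)" using 2 by (intro one_less_power) auto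
    qed (use assms(1) in auto)
    ultimately show False by simp
  qed
qed

lemma Sub_grand:
  assumes "2 \<le> H" "c div 4 = y"
  shows "Sub (H - 2) c \<subseteq> Sub H y"
proof
  fix z assume "z \<in> Sub (H - 2) c"
  then obtain i where i: "i \<le> H - 2" "z div 2^i = c" unfolding Sub_def by auto
  have "z div 2^(i + 2) = y" using div_pow_add[of z i 2] i assms by simp
  moreover have "i + 2 \<le> H" using i assms by simp
  ultimately show "z \<in> Sub H y" unfolding Sub_def by blast
qed

lemma Sub_grand_unique:
  assumes "1 \<le> y" "c div 4 = y" "c' div 4 = y" "x \<in> Sub j c" "x \<in> Sub j' c'"
  shows "c = c'"
proof -
  obtain i where i: "x div 2^i = c" using assms(4) unfolding Sub_def by auto
  obtain i' where i': "x div 2^i' = c'" using assms(5) unfolding Sub_def by auto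
  have "x div 2^(i + 2) = y" using div_pow_add[of x i 2] i assms by simp
  moreover have "x div 2^(i' + 2) = y" using div_pow_add[of x i' 2] i' assms by simp
  ultimately have "i + 2 = i' + 2" using div_level_unique assms(1) by blast
  thus ?thesis using i i' by simp
qed

lemma Sub_anc_in:
  assumes "i \<le> H" "x div 2^i = y" "l \<le> i"
  shows "x div 2^l \<in> Sub H y"
proof -
  have "x div 2^l div 2^(i - l) = y" using div_pow_add[of x l "i - l"] assms by simp
  thus ?thesis unfolding Sub_def using assms by (intro CollectI exI[of _ "i - l"]) auto
qed

lemma Sub_anc_out:
  assumes "1 \<le> y" "c div 4 = y" "2 \<le> H" "i \<le> H" "x div 2^i = y" "x \<notin> Sub (H - 2) c"
    "x div 2^l \<in> Sub (H - 2) c"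
  shows False
proof -
  obtain i' where i': "i' \<le> H - 2" "x div 2^l div 2^i' = c" using assms(7) unfolding Sub_def by auto
  have xc: "x div 2^(l + i') = c" using i' div_pow_add by simp
  have "x div 2^(l + i' + 2) = y" using div_pow_add[of x "l + i'" 2] xc assms(2) by simp
  hence "l + i' + 2 = i" using div_level_unique assms(1,5) by blast
  hence "l + i' \<le> H - 2" using assms(4) by simp
  hence "x \<in> Sub (H - 2) c" unfolding Sub_def using xc by blast
  thus False using assms(6) by simp
qed

lemma chain:
  fixes x :: nat
  shows "(\<forall>l\<le>i. x div 2^l \<in> R) \<Longrightarrow> P x \<noteq> P (x div 2^i) \<Longrightarrow>
     \<exists>z. z \<in> R \<and> z div 2 \<in> R \<and> P z \<noteq> P (z div 2)"
proof (induction i arbitrary: x)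
  case 0
  then show ?case by simp
next
  case (Suc i)
  show ?case
  proof (cases "P x = P (x div 2)")
    case True
    have "\<forall>l\<le>i. x div 2 div 2^l \<in> R"
    proof (intro allI impI)
      fix l assume "l \<le> i"
      hence "Suc l \<le> Suc i" by simp
      hence "x div 2^(Suc l) \<in> R" using Suc.prems(1) by blast
      moreover have "x div 2 div 2^l = x div 2^(Suc l)" using div_pow_add[of x 1 l] by simp
      ultimately show "x div 2 div 2^l \<in> R" by simp
    qed
    moreover have "P (x div 2) \<noteq> P (x div 2 div 2^i)"
      using Suc.prems(2) True div_pow_add[of x 1 i] by simp
    ultimately show ?thesis using Suc.IH by blast
  next
    case False
    have "x \<in> R" using Suc.prems(1)[rule_format, of 0] by simp
    moreover have "x div 2 \<in> R" using Suc.prems(1)[rule_format, of 1] by simp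
    ultimately show ?thesis using False by blast
  qed
qed



lemma extra_pair:
  assumes b0: "0 < b" and na: "nadj zh zl" and r: "1 \<le> zh" "zh < N" "1 \<le> zl" "zl < N"
    and hv: "heavy b vs t zh" and lt: "\<not> heavy b vs t zl"
  shows "\<exists>T f. pairing (BG b N) (set (take t vs)) T f \<and> card T = b div 2 \<and> T \<subseteq> blob b zh
     \<and> f ` T \<subseteq> blob b zl"
proof -
  let ?S = "set (take t vs)"
  have "b div 2 \<le> card (blob b zh \<inter> ?S)" using hv unfolding heavy_def pc_def by linarith
  then obtain T where T: "T \<subseteq> blob b zh \<inter> ?S" "card T = b div 2" "finite T"
    by (meson obtain_subset_with_card_n)
  have "card (blob b zl - ?S) = b - card (blob b zl \<inter> ?S)"
    using b0 card_Diff_subset_Int[of "blob b zl" ?S] by (simp add: card_Diff_subset_Int)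
  moreover have "2 * card (blob b zl \<inter> ?S) \<le> b" using lt unfolding heavy_def pc_def by linarith
  ultimately have c2: "b div 2 \<le> card (blob b zl - ?S)" by linarith
  have "\<exists>f. pairing (BG b N) ?S (\<Union>u\<in>{zh}. T) f \<and> card (\<Union>u\<in>{zh}. T) = (\<Sum>u\<in>{zh}. card T)
     \<and> (\<forall>a \<in> (\<Union>u\<in>{zh}. T). f a \<in> blob b ((\<lambda>_. zl) (a div b)))"
    by (rule blob_pairing[OF b0, of "{zh}" "\<lambda>_. zl" N "\<lambda>_. T" ?S]) (use na r T c2 in auto)
  then obtain f where f: "pairing (BG b N) ?S T f" "\<forall>a\<in>T. f a \<in> blob b zl" by auto
  show ?thesis using f T by blast
qed

lemma dense:
  assumes b2: "2 \<le> b"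
  shows "1 \<le> H \<Longrightarrow> 1 \<le> y \<Longrightarrow> (y + 1) * 2^H \<le> N \<Longrightarrow> (\<forall>z\<in>Sub H y. heavy b vs (length vs) z) \<Longrightarrow>
     \<exists>t\<le>length vs. \<exists>A f. pairing (BG b N) (set (take t vs)) A f \<and> (b div 2) * ((H - 1) div 2) \<le> card A
        \<and> A \<subseteq> Blobs b (Sub H y) \<and> f ` A \<subseteq> Blobs b (Sub H y)
        \<and> (\<exists>x\<in>Sub H y. heavy b vs t x) \<and> (\<exists>x\<in>Sub H y. \<not> heavy b vs t x)"
proof (induction H arbitrary: y rule: less_induct)
  case (less H)
  let ?X = "Sub H y"
  let ?hv = "heavy b vs"
  have b0: "0 < b" using b2 by simp
  define t1 where "t1 = (LEAST t. \<exists>x\<in>?X. ?hv t x)"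
  have ex1: "\<exists>x\<in>?X. ?hv (length vs) x" using less.prems(4) Sub_self by blast
  have t1: "\<exists>x\<in>?X. ?hv t1 x" unfolding t1_def by (rule LeastI_ex) (use ex1 in blast)
  have t1le: "t1 \<le> length vs" unfolding t1_def by (rule Least_le) (use ex1 in blast)
  have t1pos: "0 < t1" using t1 heavy0 by (cases t1) auto
  have none: "\<not> ?hv (t1 - 1) x" if "x \<in> ?X" for x
  proof -
    have "t1 - 1 < t1" using t1pos by simp
    hence "\<not> (\<exists>x\<in>?X. ?hv (t1 - 1) x)" unfolding t1_def by (rule not_less_Least)
    thus ?thesis using that by blast
  qed
  show ?case
  proof (cases "H \<le> 2")
    case True
    define w where "w = vs ! (t1 - 1) div b"
    have yX: "y \<in> ?X" "2 * y \<in> ?X" using Sub_self Sub_child less.prems(1) by auto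
    have "2 * y \<noteq> y" using less.prems(2) by simp
    then obtain x where x: "x \<in> ?X" "x \<noteq> w" using yX by metis
    have "pc b vs (Suc (t1 - 1)) x = pc b vs (t1 - 1) x"
      by (rule pc_step) (use t1le t1pos x w_def in auto)
    hence "pc b vs t1 x = pc b vs (t1 - 1) x" using t1pos by simp
    hence lx: "\<not> ?hv t1 x" using none[OF x(1)] unfolding heavy_def by simp
    have "(H - 1) div 2 = 0" using True by auto
    hence "pairing (BG b N) (set (take t1 vs)) {} id \<and> (b div 2) * ((H - 1) div 2) \<le> card {}
        \<and> {} \<subseteq> Blobs b ?X \<and> id ` {} \<subseteq> Blobs b ?X" using pairing_empty by simp
    thus ?thesis using t1le t1 lx x by blast
  next
    case False
    hence H3: "3 \<le> H" by simp
    define t2 where "t2 = (LEAST t. \<forall>x\<in>?X. ?hv t x)"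
    have ex2: "\<forall>x\<in>?X. ?hv (length vs) x" using less.prems(4) by blast
    have t2: "\<forall>x\<in>?X. ?hv t2 x" unfolding t2_def by (rule LeastI_ex) (use ex2 in blast)
    have t2pos: "0 < t2" using t2 heavy0 Sub_self by (cases t2) blast+
    obtain x2 where x2: "x2 \<in> ?X" "\<not> ?hv (t2 - 1) x2"
    proof -
      have "t2 - 1 < t2" using t2pos by simp
      hence "\<not> (\<forall>x\<in>?X. ?hv (t2 - 1) x)" unfolding t2_def by (rule not_less_Least)
      thus ?thesis using that by blast
    qed
    obtain x1 where x1: "x1 \<in> ?X" "?hv t1 x1" using t1 by blast
    define C where "C = {4*y..4*y+3}"
    define B1 where "B1 = {c\<in>C. x1 \<in> Sub (H - 2) c}"
    define B2 where "B2 = {c\<in>C. x2 \<in> Sub (H - 2) c}"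
    have cdiv: "c div 4 = y" if "c \<in> C" for c using that unfolding C_def by auto
    have cB1: "card B1 \<le> 1"
    proof -
      have "finite B1" unfolding B1_def C_def by simp
      moreover have "\<forall>c\<in>B1. \<forall>c'\<in>B1. c = c'"
        unfolding B1_def using Sub_grand_unique[OF less.prems(2)] cdiv by blast
      ultimately show ?thesis using card_le_Suc0_iff_eq by auto
    qed
    have cB2: "card B2 \<le> 1"
    proof -
      have "finite B2" unfolding B2_def C_def by simp
      moreover have "\<forall>c\<in>B2. \<forall>c'\<in>B2. c = c'"
        unfolding B2_def using Sub_grand_unique[OF less.prems(2)] cdiv by blast
      ultimately show ?thesis using card_le_Suc0_iff_eq by auto
    qed
    have "card C = 4" unfolding C_def by simp
    moreover have "card (B1 \<union> B2) \<le> 2" using cB1 cB2 card_Un_le[of B1 B2] by linarith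
    ultimately have "card (C - (B1 \<union> B2)) \<ge> 2"
      using diff_card_le_card_Diff[of "B1 \<union> B2" C] unfolding B1_def B2_def C_def by auto
    have "C - (B1 \<union> B2) \<noteq> {}"
    proof
      assume e: "C - (B1 \<union> B2) = {}"
      have "card (C - (B1 \<union> B2)) = 0" by (simp only: e card.empty)
      thus False using \<open>card (C - (B1 \<union> B2)) \<ge> 2\<close> by simp
    qed
    then obtain c where c: "c \<in> C" "x1 \<notin> Sub (H - 2) c" "x2 \<notin> Sub (H - 2) c"
      unfolding B1_def B2_def by blast
    have cy: "c div 4 = y" using cdiv c by simp
    have c1: "1 \<le> c" using c(1) less.prems(2) unfolding C_def by auto
    have subc: "Sub (H - 2) c \<subseteq> ?X" using Sub_grand[OF _ cy] H3 by simp
    have "(c + 1) * 2^(H - 2) \<le> (4 * (y + 1)) * 2^(H - 2)"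
      using c(1) unfolding C_def by (intro mult_le_mono1) auto
    also have "... = (y + 1) * 2^H"
    proof -
      have "H = (H - 2) + 2" using H3 by simp
      hence "(2::nat)^H = 2^(H - 2) * 2^2" by (metis power_add)
      hence "(2::nat)^H = 4 * 2^(H - 2)" by simp
      thus ?thesis by (simp add: algebra_simps)
    qed
    finally have cN: "(c + 1) * 2^(H - 2) \<le> N" using less.prems(3) by linarith
    have "H - 2 < H" "1 \<le> H - 2" using H3 by auto
    moreover have "\<forall>z\<in>Sub (H - 2) c. ?hv (length vs) z" using less.prems(4) subc by blast
    ultimately obtain t A f where tA: "t \<le> length vs" "pairing (BG b N) (set (take t vs)) A f"
      "(b div 2) * ((H - 2 - 1) div 2) \<le> card A"
      "A \<subseteq> Blobs b (Sub (H - 2) c)" "f ` A \<subseteq> Blobs b (Sub (H - 2) c)"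
      and xh: "\<exists>x\<in>Sub (H - 2) c. ?hv t x" and xl: "\<exists>x\<in>Sub (H - 2) c. \<not> ?hv t x"
      using less.IH[OF _ _ c1 cN] by blast
    have "t1 \<le> t" unfolding t1_def by (rule Least_le) (use xh subc in blast)
    hence hx1: "?hv t x1" using heavy_mono x1 by blast
    have "t < t2"
    proof (rule ccontr)
      assume "\<not> t < t2"
      hence "\<forall>x\<in>?X. ?hv t x" using t2 heavy_mono[of t2 t] by auto
      thus False using xl subc by blast
    qed
    hence "t \<le> t2 - 1" by simp
    hence lx2: "\<not> ?hv t x2" using heavy_mono[of t "t2 - 1" b vs x2] x2 by blast
    let ?R = "?X - Sub (H - 2) c"
    have inR: "\<forall>l\<le>i. x div 2^l \<in> ?R" if "x \<in> ?R" "i \<le> H" "x div 2^i = y" for x i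
    proof (intro allI impI)
      fix l assume "l \<le> i"
      have "x div 2^l \<in> ?X" by (rule Sub_anc_in) (use that \<open>l \<le> i\<close> in auto)
      moreover have "x div 2^l \<notin> Sub (H - 2) c"
        using Sub_anc_out[OF less.prems(2) cy _ that(2,3)] H3 that(1) by auto
      ultimately show "x div 2^l \<in> ?R" by simp
    qed
    have x1R: "x1 \<in> ?R" and x2R: "x2 \<in> ?R" using x1 x2 c by auto
    obtain z where z: "z \<in> ?R" "z div 2 \<in> ?R" "?hv t z \<noteq> ?hv t (z div 2)"
    proof (cases "?hv t y")
      case True
      obtain i where i: "i \<le> H" "x2 div 2^i = y" using x2 unfolding Sub_def by auto
      show ?thesis using chain[OF inR[OF x2R i], of "?hv t"] i True lx2 that by auto
    next
      case False
      obtain i where i: "i \<le> H" "x1 div 2^i = y" using x1 unfolding Sub_def by auto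
      show ?thesis using chain[OF inR[OF x1R i], of "?hv t"] i False hx1 that by auto
    qed
    have zr: "1 \<le> z \<and> z < N" "1 \<le> z div 2 \<and> z div 2 < N"
      using Sub_range[OF less.prems(2,3)] z by auto
    obtain zh zl where zhl: "zh \<in> ?R" "zl \<in> ?R" "nadj zh zl" "?hv t zh" "\<not> ?hv t zl"
      "1 \<le> zh" "zh < N" "1 \<le> zl" "zl < N"
    proof (cases "?hv t z")
      case True
      then show ?thesis using that[of z "z div 2"] z zr unfolding nadj_def by auto
    next
      case False
      then show ?thesis using that[of "z div 2" z] z zr unfolding nadj_def by auto
    qed
    obtain T g where T: "pairing (BG b N) (set (take t vs)) T g" "card T = b div 2" "T \<subseteq> blob b zh"
      "g ` T \<subseteq> blob b zl"
      using extra_pair[OF b0 zhl(3) zhl(6-9) zhl(4,5)] by blast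
    have d1: "A \<inter> T = {}" using tA(4) T(3) zhl(1) unfolding Blobs_def blob_def by auto
    have d2: "f ` A \<inter> g ` T = {}" using tA(5) T(4) zhl(2) unfolding Blobs_def blob_def by auto
    have U: "pairing (BG b N) (set (take t vs)) (A \<union> T) (\<lambda>a. if a \<in> A then f a else g a)
      \<and> card (A \<union> T) = card A + card T" using pairing_union[OF tA(2) T(1) d1 d2] .
    have "(H - 1) div 2 = (H - 2 - 1) div 2 + 1" using H3 by simp
    hence "(b div 2) * ((H - 1) div 2) = (b div 2) * ((H - 2 - 1) div 2) + b div 2"
      by (simp add: algebra_simps)
    hence cardU: "(b div 2) * ((H - 1) div 2) \<le> card (A \<union> T)" using U tA(3) T(2) by linarith
    have inA: "A \<union> T \<subseteq> Blobs b ?X" using tA(4) T(3) zhl(1) subc unfolding Blobs_def blob_def by auto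
    have inB: "(\<lambda>a. if a \<in> A then f a else g a) ` (A \<union> T) \<subseteq> Blobs b ?X"
    proof
      fix v assume "v \<in> (\<lambda>a. if a \<in> A then f a else g a) ` (A \<union> T)"
      then obtain a where a: "a \<in> A \<union> T" "v = (if a \<in> A then f a else g a)" by (rule imageE) blast
      show "v \<in> Blobs b ?X"
      proof (cases "a \<in> A")
        case True
        then show ?thesis using a tA(5) subc unfolding Blobs_def by auto
      next
        case False
        then have "a \<in> T" using a by auto
        then show ?thesis using a False T(4) zhl(2) unfolding Blobs_def blob_def by auto
      qed
    qed
    have "\<exists>x\<in>?X. ?hv t x" "\<exists>x\<in>?X. \<not> ?hv t x" using xh xl subc by auto
    then show ?thesis using tA(1) U cardU inA inB by blast
  qed
qed



definition Bd :: "nat \<Rightarrow> nat set \<Rightarrow> nat set" where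
  "Bd N D = {u \<in> D. (2 \<le> u \<and> u div 2 \<notin> D) \<or> (2 * u < N \<and> (2 * u \<notin> D \<or> 2 * u + 1 \<notin> D))}"

definition Near :: "nat \<Rightarrow> nat \<Rightarrow> nat set" where
  "Near H u = {z. \<exists>i\<le>H. \<exists>j\<le>H. z div 2^j = u div 2^i}"

lemma Near_card: "finite (Near H u) \<and> card (Near H u) \<le> (H + 1) * (H + 1) * 2^H"
proof -
  let ?F = "\<lambda>(i, j, r). (u div 2^i) * 2^j + r"
  let ?Dm = "{..H} \<times> {..H} \<times> {..<(2::nat)^H}"
  have sub: "Near H u \<subseteq> ?F ` ?Dm"
  proof
    fix z assume "z \<in> Near H u"
    then obtain i j where ij: "i \<le> H" "j \<le> H" "z div 2^j = u div 2^i" unfolding Near_def by auto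
    have "z = (z div 2^j) * 2^j + z mod 2^j" by (rule div_mult_mod_eq[symmetric])
    hence "z = ?F (i, j, z mod 2^j)" using ij by simp
    moreover have "z mod 2^j < 2^H"
    proof -
      have "z mod 2^j < 2^j" by simp
      moreover have "(2::nat)^j \<le> 2^H" by (rule power_increasing) (use ij in auto)
      ultimately show ?thesis by linarith
    qed
    ultimately show "z \<in> ?F ` ?Dm" using ij by (intro image_eqI[of _ _ "(i, j, z mod 2^j)"]) auto
  qed
  have "finite (?F ` ?Dm)" by simp
  moreover have "card (?F ` ?Dm) \<le> card ?Dm" by (rule card_image_le) simp
  moreover have "card ?Dm = (H + 1) * (H + 1) * 2^H" by (simp add: card_cartesian_product algebra_simps)
  moreover have "card (Near H u) \<le> card (?F ` ?Dm)" by (rule card_mono[OF _ sub]) simp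
  moreover have "finite (Near H u)" by (rule finite_subset[OF sub]) simp
  ultimately show ?thesis by linarith
qed

lemma cover:
  assumes N: "N = 2^n" and D: "D \<subseteq> {1..<N}"
    and nofull: "\<And>y. 1 \<le> y \<Longrightarrow> (y + 1) * 2^H \<le> N \<Longrightarrow> \<not> Sub H y \<subseteq> D"
  shows "D \<subseteq> (\<Union>u\<in>Bd N D. Near H u) \<union> {..<2^(H+1)}"
proof
  fix z assume zD: "z \<in> D"
  show "z \<in> (\<Union>u\<in>Bd N D. Near H u) \<union> {..<2^(H+1)}"
  proof (cases "z < 2^(H+1)")
    case True then show ?thesis by simp
  next
    case False
    hence zH: "2^(H+1) \<le> z" by simp
    have ylow: "2 \<le> z div 2^l" if "l \<le> H" for l
    proof -
      have p: "(2::nat)^l \<le> 2^H" by (rule power_increasing) (use that in auto)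
      have "(2::nat)^(H+1) = 2 * 2^H" by simp
      hence "2 * 2^l \<le> z" using p zH by linarith
      thus ?thesis using less_eq_div_iff_mult_less_eq[of "2^l" 2 z] by simp
    qed
    have zN: "z < N" using zD D by auto
    show ?thesis
    proof (cases "\<exists>i\<le>H. z div 2^i \<notin> D")
      case True
      define i0 where "i0 = (LEAST i. i \<le> H \<and> z div 2^i \<notin> D)"
      have i0: "i0 \<le> H \<and> z div 2^i0 \<notin> D" unfolding i0_def by (rule LeastI_ex) (use True in blast)
      have i0pos: "0 < i0" using i0 zD by (cases i0) auto
      have "\<not> (i0 - 1 \<le> H \<and> z div 2^(i0 - 1) \<notin> D)"
        unfolding i0_def by (rule not_less_Least) (use i0pos i0_def in simp)
      hence uD: "z div 2^(i0 - 1) \<in> D" using i0 by auto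
      define u where "u = z div 2^(i0 - 1)"
      have "u div 2 = z div 2^i0" unfolding u_def using div_pow_add[of z "i0 - 1" 1] i0pos by simp
      hence "u div 2 \<notin> D" using i0 by simp
      moreover have "i0 - 1 \<le> H" using i0 by linarith
      hence "2 \<le> u" unfolding u_def using ylow[of "i0 - 1"] by blast
      ultimately have "u \<in> Bd N D" using uD unfolding Bd_def u_def by auto
      moreover have "z \<in> Near H u"
      proof -
        have "z div 2^(i0 - 1) = u div 2^0" "i0 - 1 \<le> H" "(0::nat) \<le> H" using i0 u_def by auto
        thus ?thesis unfolding Near_def by blast
      qed
      ultimately show ?thesis by blast
    next
      case False
      hence allD: "\<forall>i\<le>H. z div 2^i \<in> D" by blast
      define y where "y = z div 2^H"
      have y2: "2 \<le> y" unfolding y_def using ylow by simp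
      have yD: "y \<in> D" using allD y_def by simp
      have "H < n"
      proof (rule ccontr)
        assume "\<not> H < n"
        hence "N \<le> 2^H" using N by simp
        hence "z < 2^H" using zN by simp
        thus False using zH by simp
      qed
      have yN: "(y + 1) * 2^H \<le> N"
      proof -
        have "y < 2^(n - H)"
        proof -
          have "z < 2^(n - H) * 2^H" using zN N \<open>H < n\<close> by (simp add: power_add[symmetric])
          thus ?thesis unfolding y_def using div_less_iff_less_mult[of "2^H" z "2^(n-H)"] by simp
        qed
        hence "(y + 1) * 2^H \<le> 2^(n - H) * 2^H" by (intro mult_le_mono1) simp
        thus ?thesis using N \<open>H < n\<close> by (simp add: power_add[symmetric])
      qed
      obtain w where w: "w \<in> Sub H y" "w \<notin> D" using nofull[of y] y2 yN by auto
      obtain i where i: "i \<le> H" "w div 2^i = y" using w unfolding Sub_def by auto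
      define l0 where "l0 = (LEAST l. w div 2^l \<in> D)"
      have l0: "w div 2^l0 \<in> D" unfolding l0_def by (rule LeastI[of _ i]) (use i yD in simp)
      have l0i: "l0 \<le> i" unfolding l0_def by (rule Least_le) (use i yD in simp)
      have l0pos: "0 < l0" using l0 w(2) by (cases l0) auto
      have cD: "w div 2^(l0 - 1) \<notin> D"
        unfolding l0_def by (rule not_less_Least) (use l0pos l0_def in simp)
      define u where "u = w div 2^l0"
      define c where "c = w div 2^(l0 - 1)"
      have cu: "c div 2 = u" unfolding c_def u_def using div_pow_add[of w "l0 - 1" 1] l0pos by simp
      have "w < N" using Sub_range[of y H N w] y2 yN w by auto
      moreover have "c \<le> w" unfolding c_def by (simp add: div_le_dividend)
      ultimately have cN: "c < N" by simp
      have "c = 2 * u \<or> c = 2 * u + 1" using cu by auto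
      hence "2 * u < N \<and> (2 * u \<notin> D \<or> 2 * u + 1 \<notin> D)" using cN cD c_def by auto
      hence "u \<in> Bd N D" using l0 unfolding Bd_def u_def by auto
      moreover have "z \<in> Near H u"
      proof -
        have "u div 2^(i - l0) = y" unfolding u_def using div_pow_add[of w l0 "i - l0"] l0i i by simp
        hence "z div 2^H = u div 2^(i - l0)" "i - l0 \<le> H" "H \<le> H" using y_def i by auto
        thus ?thesis unfolding Near_def by blast
      qed
      ultimately show ?thesis by blast
    qed
  qed
qed

lemma count_D:
  assumes N: "N = 2^n" and D: "D \<subseteq> {1..<N}"
    and nofull: "\<And>y. 1 \<le> y \<Longrightarrow> (y + 1) * 2^H \<le> N \<Longrightarrow> \<not> Sub H y \<subseteq> D"
  shows "card D \<le> card (Bd N D) * ((H + 1) * (H + 1) * 2^H) + 2^(H+1)"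
proof -
  have "Bd N D \<subseteq> {1..<N}" using D unfolding Bd_def by auto
  hence fB: "finite (Bd N D)" using finite_subset by blast
  have fU: "finite (\<Union>u\<in>Bd N D. Near H u)" using fB Near_card by auto
  have "card D \<le> card ((\<Union>u\<in>Bd N D. Near H u) \<union> {..<2^(H+1)})"
    using cover[OF N D nofull] fU by (intro card_mono) auto
  also have "... \<le> card (\<Union>u\<in>Bd N D. Near H u) + card {..<(2::nat)^(H+1)}" by (rule card_Un_le)
  also have "card (\<Union>u\<in>Bd N D. Near H u) \<le> (\<Sum>u\<in>Bd N D. card (Near H u))" by (rule card_UN_le[OF fB])
  also have "... \<le> (\<Sum>u\<in>Bd N D. (H + 1) * (H + 1) * 2^H)" using Near_card by (intro sum_mono) auto
  also have "... = card (Bd N D) * ((H + 1) * (H + 1) * 2^H)" by simp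
  finally show ?thesis by simp
qed



lemma bd_select:
  assumes N: "N = 2^n" and n1: "1 \<le> n" and D: "D \<subseteq> {1..<N}"
  shows "\<exists>Q g. Q \<subseteq> Bd N D \<and> inj_on g Q \<and> card (Bd N D) \<le> 3 * card Q \<and>
     (\<forall>u\<in>Q. nadj u (g u) \<and> 1 \<le> g u \<and> g u < N \<and> g u \<notin> D)"
proof -
  let ?B = "Bd N D"
  have "?B \<subseteq> {1..<N}" using D unfolding Bd_def by auto
  hence fB: "finite ?B" using finite_subset by blast
  define Bc where "Bc = {u\<in>?B. 2 * u < N \<and> (2 * u \<notin> D \<or> 2 * u + 1 \<notin> D)}"
  define Be where "Be = {u\<in>?B. 2 \<le> u \<and> u div 2 \<notin> D \<and> even u}"
  define Bo where "Bo = {u\<in>?B. 2 \<le> u \<and> u div 2 \<notin> D \<and> odd u}"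
  have BU: "?B = Bc \<union> Be \<union> Bo" unfolding Bc_def Be_def Bo_def Bd_def by auto
 have "card (Bc \<union> Be \<union> Bo) \<le> card (Bc \<union> Be) + card Bo" by (rule card_Un_le)
  moreover have "card (Bc \<union> Be) \<le> card Bc + card Be" by (rule card_Un_le)
  ultimately have "card ?B \<le> card Bc + card Be + card Bo" unfolding BU by linarith
  hence three: "card ?B \<le> 3 * card Bc \<or> card ?B \<le> 3 * card Be \<or> card ?B \<le> 3 * card Bo" by linarith
  have Ne: "2 * u < N \<Longrightarrow> 2 * u + 1 < N" for u
  proof -
    assume a: "2 * u < N"
    have "N = 2^(Suc (n - 1))" using N n1 by simp
    hence "N = 2 * 2^(n - 1)" by (simp only: power_Suc)
    hence "u < 2^(n - 1)" using a by simp
    thus "2 * u + 1 < N" using \<open>N = 2 * 2^(n - 1)\<close> by linarith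
  qed
  have BD: "?B \<subseteq> D" unfolding Bd_def by auto
  have rng: "1 \<le> u \<and> u < N" if "u \<in> ?B" for u using that BD D by auto
  consider "card ?B \<le> 3 * card Bc" | "card ?B \<le> 3 * card Be" | "card ?B \<le> 3 * card Bo" using three by blast
  then show ?thesis
  proof cases
    case 1
    define g where "g u = (if 2 * u \<notin> D then 2 * u else 2 * u + 1)" for u
    have "g u div 2 = u" for u unfolding g_def by auto
    hence "inj_on g Bc"
    proof -
      assume gd: "\<And>u. g u div 2 = u"
      show "inj_on g Bc"
      proof (rule inj_onI)
        fix x y assume "x \<in> Bc" "y \<in> Bc" "g x = g y"
        hence "g x div 2 = g y div 2" by simp
        thus "x = y" using gd by simp
      qed
    qed
    moreover have "\<forall>u\<in>Bc. nadj u (g u) \<and> 1 \<le> g u \<and> g u < N \<and> g u \<notin> D"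
    proof
      fix u assume u: "u \<in> Bc"
      hence "u \<in> ?B" "2 * u < N" "2 * u \<notin> D \<or> 2 * u + 1 \<notin> D" unfolding Bc_def by auto
      moreover have "1 \<le> u" using rng \<open>u \<in> ?B\<close> by blast
      ultimately show "nadj u (g u) \<and> 1 \<le> g u \<and> g u < N \<and> g u \<notin> D"
        using Ne unfolding g_def nadj_def by auto
    qed
    moreover have "Bc \<subseteq> ?B" unfolding Bc_def by auto
    ultimately show ?thesis using 1 by blast
  next
    case 2
    have "inj_on (\<lambda>u. u div 2) Be"
    proof (rule inj_onI)
      fix x y assume "x \<in> Be" "y \<in> Be" "x div 2 = y div 2"
      hence "even x" "even y" unfolding Be_def by auto
      hence "x = 2 * (x div 2)" "y = 2 * (y div 2)" by simp_all
      thus "x = y" using \<open>x div 2 = y div 2\<close> by simp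
    qed
    moreover have "\<forall>u\<in>Be. nadj u (u div 2) \<and> 1 \<le> u div 2 \<and> u div 2 < N \<and> u div 2 \<notin> D"
      using rng unfolding Be_def nadj_def by (auto intro: le_less_trans[OF div_le_dividend])
    moreover have "Be \<subseteq> ?B" unfolding Be_def by auto
    ultimately show ?thesis using 2 by blast
  next
    case 3
    have "inj_on (\<lambda>u. u div 2) Bo"
    proof (rule inj_onI)
      fix x y assume "x \<in> Bo" "y \<in> Bo" "x div 2 = y div 2"
      hence "odd x" "odd y" unfolding Bo_def by auto
      hence "x = 2 * (x div 2) + 1" "y = 2 * (y div 2) + 1" by simp_all
      thus "x = y" using \<open>x div 2 = y div 2\<close> by simp
    qed
    moreover have "\<forall>u\<in>Bo. nadj u (u div 2) \<and> 1 \<le> u div 2 \<and> u div 2 < N \<and> u div 2 \<notin> D"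
      using rng unfolding Bo_def nadj_def by (auto intro: le_less_trans[OF div_le_dividend])
    moreover have "Bo \<subseteq> ?B" unfolding Bo_def by auto
    ultimately show ?thesis using 3 by blast
  qed
qed

lemma cross_pairing:
  assumes b2: "2 \<le> b" and fQ: "finite Q" and ig: "inj_on g Q"
    and Qp: "\<And>u. u \<in> Q \<Longrightarrow> 1 \<le> u \<and> u < N \<and> b < 2 * card (blob b u \<inter> V)"
    and gp: "\<And>u. u \<in> Q \<Longrightarrow> nadj u (g u) \<and> 1 \<le> g u \<and> g u < N \<and> 2 * card (blob b (g u) \<inter> V) \<le> b"
  shows "\<exists>A f. pairing (BG b N) V A f \<and> card A = card Q * (b div 2)"
proof -
  have b0: "0 < b" using b2 by simp
  define T where "T u = (SOME T. T \<subseteq> blob b u \<inter> V \<and> card T = b div 2)" for u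
  have T: "T u \<subseteq> blob b u \<inter> V \<and> card (T u) = b div 2" if "u \<in> Q" for u
  proof -
    have "b div 2 \<le> card (blob b u \<inter> V)" using Qp[OF that] by linarith
    then obtain T0 where "T0 \<subseteq> blob b u \<inter> V" "card T0 = b div 2" by (meson obtain_subset_with_card_n)
    hence "\<exists>T. T \<subseteq> blob b u \<inter> V \<and> card T = b div 2" by blast
    thus ?thesis unfolding T_def by (rule someI_ex)
  qed
  have Ac: "card (T u) \<le> card (blob b (g u) - V)" if "u \<in> Q" for u
  proof -
    have "card (blob b (g u) - V) = b - card (blob b (g u) \<inter> V)"
      using b0 by (simp add: card_Diff_subset_Int)
    thus ?thesis using T[OF that] gp[OF that] by linarith
  qed
  obtain f where f: "pairing (BG b N) V (\<Union>u\<in>Q. T u) f"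
      "card (\<Union>u\<in>Q. T u) = (\<Sum>u\<in>Q. card (T u))"
    using blob_pairing[OF b0 fQ ig, of N T V] gp Qp T Ac nadj_def by blast
  have "(\<Sum>u\<in>Q. card (T u)) = card Q * (b div 2)" using T by simp
  thus ?thesis using f by auto
qed

lemma internal_pairing:
  assumes b2: "2 \<le> b" and fQ: "finite Q"
    and Qp: "\<And>u. u \<in> Q \<Longrightarrow> 1 \<le> u \<and> u < N \<and> 2 * card (blob b u \<inter> V) \<le> b"
  shows "\<exists>A f. pairing (BG b N) V A f \<and> card A = (\<Sum>u\<in>Q. card (blob b u \<inter> V))"
proof -
  have b0: "0 < b" using b2 by simp
  have Ac: "card (blob b u \<inter> V) \<le> card (blob b (id u) - V)" if "u \<in> Q" for u
  proof -
    have "card (blob b u - V) = b - card (blob b u \<inter> V)"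
      using b0 by (simp add: card_Diff_subset_Int)
    thus ?thesis using Qp[OF that] by (simp del: Diff_eq_empty_iff) linarith
  qed
  obtain f where f: "pairing (BG b N) V (\<Union>u\<in>Q. blob b u \<inter> V) f"
      "card (\<Union>u\<in>Q. blob b u \<inter> V) = (\<Sum>u\<in>Q. card (blob b u \<inter> V))"
    using blob_pairing[OF b0 fQ, of id N "\<lambda>u. blob b u \<inter> V" V] Qp Ac nadj_def by auto
  thus ?thesis by blast
qed

lemma card_split:
  assumes b0: "0 < b" and V: "V \<subseteq> BV b N"
  shows "card V = (\<Sum>x\<in>{1..<N}. card (blob b x \<inter> V))"
proof -
  have "V = (\<Union>x\<in>{1..<N}. blob b x \<inter> V)"
    using V BV_iff[OF b0] unfolding blob_def by auto
  moreover have "card (\<Union>x\<in>{1..<N}. blob b x \<inter> V) = (\<Sum>x\<in>{1..<N}. card (blob b x \<inter> V))"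
  proof (rule card_UN_disjoint)
    show "\<forall>i\<in>{1..<N}. finite (blob b i \<inter> V)" using b0 by simp
    show "\<forall>i\<in>{1..<N}. \<forall>j\<in>{1..<N}. i \<noteq> j \<longrightarrow> blob b i \<inter> V \<inter> (blob b j \<inter> V) = {}"
      unfolding blob_def by auto
  qed simp
  ultimately show ?thesis by simp
qed



lemma pow_mul_H: "(2::nat)^(k * H) = (2^H)^k"
  by (simp add: power_mult[symmetric] mult.commute)

lemma core:
  assumes b2: "2 \<le> b" and N: "N = 2^n" and n1: "1 \<le> n" and V: "set vs \<subseteq> BV b N"
    and m: "2^(8*H) \<le> card (set vs)" and bH: "b < 2^H" and H3: "3 \<le> H"
  shows "\<exists>j\<le>length vs. \<exists>A f. pairing (BG b N) (set (take j vs)) A f \<and> b * H \<le> 24 * card A"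
proof -
  have b0: "0 < b" using b2 by simp
  let ?V = "set vs"
  let ?m = "card ?V"
  define P where "P = (2::nat)^H"
  have bP: "b < P" using bH P_def by simp
  have "H < P" unfolding P_def by (rule less_exp)
  hence HP: "H + 1 \<le> P" by simp
  have m8: "P^8 \<le> ?m" using m pow_mul_H[of 8 H] P_def by simp
  have tk: "take (length vs) vs = vs" by simp
  define D where "D = {x \<in> {1..<N}. heavy b vs (length vs) x}"
  have hvD: "heavy b vs (length vs) x \<longleftrightarrow> b < 2 * card (blob b x \<inter> ?V)" for x
    unfolding heavy_def pc_def by simp
  have Dsub: "D \<subseteq> {1..<N}" unfolding D_def by auto
  have bHP: "b * H \<le> P * P" using bP HP by (intro mult_le_mono) auto
  have b3: "b \<le> 3 * (b div 2)" using b2 by presburger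
  show ?thesis
  proof (cases "\<exists>y. 1 \<le> y \<and> (y + 1) * 2^H \<le> N \<and> Sub H y \<subseteq> D")
    case True
    then obtain y where y: "1 \<le> y" "(y + 1) * 2^H \<le> N" "Sub H y \<subseteq> D" by blast
    have "\<forall>z\<in>Sub H y. heavy b vs (length vs) z" using y(3) unfolding D_def by auto
    then obtain t A f where tA: "t \<le> length vs" "pairing (BG b N) (set (take t vs)) A f"
        "(b div 2) * ((H - 1) div 2) \<le> card A"
      using dense[OF b2, of H y N vs] H3 y by auto
    have "H \<le> 8 * ((H - 1) div 2)" using H3 by presburger
    hence "b * H \<le> (3 * (b div 2)) * (8 * ((H - 1) div 2))" using b3 by (intro mult_le_mono)
    also have "... = 24 * ((b div 2) * ((H - 1) div 2))" by simp
    also have "... \<le> 24 * card A" using tA(3) by simp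
    finally show ?thesis using tA(1,2) by blast
  next
    case False
    hence nofull: "\<And>y. 1 \<le> y \<Longrightarrow> (y + 1) * 2^H \<le> N \<Longrightarrow> \<not> Sub H y \<subseteq> D" by blast
    have cD: "card D \<le> card (Bd N D) * ((H + 1) * (H + 1) * 2^H) + 2^(H+1)"
      by (rule count_D[OF N Dsub nofull])
    define mnd where "mnd = (\<Sum>x\<in>{1..<N} - D. card (blob b x \<inter> ?V))"
    have msplit: "?m \<le> b * card D + mnd"
    proof -
      have "?m = (\<Sum>x\<in>{1..<N}. card (blob b x \<inter> ?V))" by (rule card_split[OF b0 V])
      also have "... = mnd + (\<Sum>x\<in>D. card (blob b x \<inter> ?V))"
        unfolding mnd_def by (rule sum.subset_diff[OF Dsub]) simp
      also have "(\<Sum>x\<in>D. card (blob b x \<inter> ?V)) \<le> (\<Sum>x\<in>D. b)"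
      proof (rule sum_mono)
        fix x show "card (blob b x \<inter> ?V) \<le> b"
          using card_mono[of "blob b x" "blob b x \<inter> ?V"] b0 by simp
      qed
      finally show ?thesis by (simp add: mult.commute)
    qed
    show ?thesis
    proof (cases "?m \<le> 3 * mnd")
      case True
      have "\<exists>A f. pairing (BG b N) ?V A f \<and> card A = (\<Sum>u\<in>{1..<N} - D. card (blob b u \<inter> ?V))"
        by (rule internal_pairing[OF b2]) (use hvD in \<open>auto simp: D_def\<close>)
      then obtain A f where A: "pairing (BG b N) ?V A f" "card A = mnd" unfolding mnd_def by blast
      have "P^2 \<le> P^8" using bP b2 by (intro power_increasing) auto
      hence "P * P \<le> P^8" by (simp add: power2_eq_square)
      hence "b * H \<le> 24 * card A" using bHP m8 True A(2) by linarith
      thus ?thesis using A(1) tk by (intro exI[of _ "length vs"]) auto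
    next
      case False
      let ?\<beta> = "card (Bd N D)"
      have "H \<le> ?\<beta>"
      proof (rule ccontr)
        assume "\<not> H \<le> ?\<beta>"
        hence bl: "?\<beta> \<le> P" using HP by linarith
        have m2: "2 * ?m < 3 * (b * card D)" using msplit False by linarith
        have K: "(H + 1) * (H + 1) * 2^H \<le> P * P * P"
          using HP unfolding P_def by (intro mult_le_mono) auto
        have "b * card D \<le> b * (?\<beta> * ((H + 1) * (H + 1) * 2^H) + 2^(H+1))"
          using cD by (rule mult_le_mono2)
        also have "... = b * (?\<beta> * ((H + 1) * (H + 1) * 2^H)) + b * (2 * P)"
          unfolding P_def by (simp add: algebra_simps)
        also have "b * (?\<beta> * ((H + 1) * (H + 1) * 2^H)) \<le> P * (P * (P * P * P))"
        proof -
          have "?\<beta> * ((H + 1) * (H + 1) * 2^H) \<le> P * (P * P * P)" using bl K by (rule mult_le_mono)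
          thus ?thesis using less_imp_le[OF bP] by (rule mult_le_mono[rotated])
        qed
        also have "b * (2 * P) \<le> P * (2 * P)" using bP by simp
        finally have bc0: "b * card D \<le> P * (P * (P * P * P)) + P * (2 * P)" by simp
        have "P * (P * (P * P * P)) = P^5" "P * (2 * P) = 2 * P^2" by (simp_all add: eval_nat_numeral algebra_simps)
        hence bc: "b * card D \<le> P^5 + 2 * P^2" using bc0 by linarith
        have "(2::nat)^3 \<le> 2^H" by (rule power_increasing) (use H3 in auto)
        hence P8: "8 \<le> P" unfolding P_def by simp
        have "P^2 \<le> P^5" using P8 by (intro power_increasing) auto
        hence "3 * (b * card D) \<le> 9 * P^5" using bc by linarith
        also have "9 * P^5 < 2 * P^8"
        proof -
          have "P^8 = P^5 * P^3" by (simp add: power_add[symmetric])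
          moreover have "8 * 8 * 8 \<le> P^3"
          proof -
            have "(8::nat) * 8 * 8 \<le> P * P * P" using P8 by (intro mult_le_mono) auto
            thus ?thesis by (simp add: power3_eq_cube)
          qed
          moreover have "0 < P^5" using P8 by simp
          ultimately have "9 * P^5 < (2 * P^3) * P^5" by (intro mult_strict_right_mono) auto
          moreover have "(2 * P^3) * P^5 = 2 * P^8" using \<open>P^8 = P^5 * P^3\<close> by (simp add: mult_ac)
          ultimately show ?thesis by linarith
        qed
        also have "... \<le> 2 * ?m" using m8 by simp
        finally show False using m2 by simp
      qed
      obtain Q g where Qg: "Q \<subseteq> Bd N D" "inj_on g Q" "?\<beta> \<le> 3 * card Q"
        "\<forall>u\<in>Q. nadj u (g u) \<and> 1 \<le> g u \<and> g u < N \<and> g u \<notin> D"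
        using bd_select[OF N n1 Dsub] by blast
      have QD: "Q \<subseteq> D" using Qg(1) unfolding Bd_def by auto
      have fQ: "finite Q" using QD Dsub by (intro finite_subset[OF _ finite_atLeastLessThan[of 1 N]]) auto
      obtain A f where A: "pairing (BG b N) ?V A f" "card A = card Q * (b div 2)"
      proof -
        have "\<exists>A f. pairing (BG b N) ?V A f \<and> card A = card Q * (b div 2)"
        proof (rule cross_pairing[OF b2 fQ Qg(2)])
          fix u assume u: "u \<in> Q"
          show "1 \<le> u \<and> u < N \<and> b < 2 * card (blob b u \<inter> ?V)"
            using u QD Dsub hvD unfolding D_def by auto
          show "nadj u (g u) \<and> 1 \<le> g u \<and> g u < N \<and> 2 * card (blob b (g u) \<inter> ?V) \<le> b"
            using u Qg(4) hvD unfolding D_def by auto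
        qed
        thus ?thesis using that by blast
      qed
      have "b * H \<le> (3 * (b div 2)) * (3 * card Q)"
        using b3 \<open>H \<le> ?\<beta>\<close> Qg(3) by (intro mult_le_mono) auto
      also have "... \<le> 24 * card A" using A(2) by simp
      finally show ?thesis using A(1) tk by (intro exI[of _ "length vs"]) auto
    qed
  qed
qed



lemma card_BV: "card (BV b N) = N * b - b"
proof -
  have "BV b N = {b..<N*b}" unfolding BV_def by auto
  thus ?thesis by simp
qed

lemma per_k:
  assumes b128: "128 \<le> b"
  shows "\<exists>\<G> :: graph set.
         (\<forall>n. \<exists>G\<in>\<G>. card (verts G) \<ge> n) \<and>
         (\<forall>G\<in>\<G>. simple_graph G \<and> treewidth G \<le> 2 * b) \<and>
         (\<forall>G\<in>\<G>. \<forall>V. V \<subseteq> verts G \<and> real (card V) \<ge> real (2 * b) powr 8 \<longrightarrow>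
              real (pmw G V) \<ge> real (2 * b) * log 2 (real (card V)) / 432)"
proof (intro exI[of _ "range (\<lambda>n. BG b (2^(Suc n)))"] conjI)
  have b2: "2 \<le> b" and b0: "0 < b" using b128 by auto
  show "\<forall>n. \<exists>G\<in>range (\<lambda>n. BG b (2^(Suc n))). card (verts G) \<ge> n"
  proof
    fix n
    have "n < 2^n" by (rule less_exp)
    moreover have "2^(Suc n) = 2 * (2::nat)^n" by simp
    ultimately have "n \<le> 2^(Suc n) - 1" by linarith
    also have "... \<le> (2^(Suc n) - 1) * b" using b0 by simp
    also have "... = 2^(Suc n) * b - b" by (simp add: diff_mult_distrib)
    finally have "n \<le> card (verts (BG b (2^(Suc n))))" by (simp add: card_BV)
    thus "\<exists>G\<in>range (\<lambda>n. BG b (2^(Suc n))). card (verts G) \<ge> n" by blast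
  qed
  show "\<forall>G\<in>range (\<lambda>n. BG b (2^(Suc n))). simple_graph G \<and> treewidth G \<le> 2 * b"
  proof
    fix G assume "G \<in> range (\<lambda>n. BG b (2^(Suc n)))"
    then obtain n where G: "G = BG b (2^(Suc n))" by auto
    have "(2::nat) \<le> 2^(Suc n)" by simp
    hence "treewidth G \<le> 2 * b - 1" using tw_BG[OF b0] G by blast
    thus "simple_graph G \<and> treewidth G \<le> 2 * b" using simple_BG G by auto
  qed
  show "\<forall>G\<in>range (\<lambda>n. BG b (2^(Suc n))). \<forall>V. V \<subseteq> verts G \<and> real (card V) \<ge> real (2 * b) powr 8 \<longrightarrow>
              real (pmw G V) \<ge> real (2 * b) * log 2 (real (card V)) / 432"
  proof (intro ballI allI impI)
    fix G V assume G: "G \<in> range (\<lambda>n. BG b (2^(Suc n)))"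
      and V: "V \<subseteq> verts G \<and> real (card V) \<ge> real (2 * b) powr 8"
    then obtain n where Gn: "G = BG b (2^(Suc n))" by auto
    define N where "N = (2::nat)^(Suc n)"
    have VB: "V \<subseteq> BV b N" using V Gn N_def by simp
    have finV: "finite V" using VB simple_BG[of b N] unfolding simple_graph_def
      by (auto intro: finite_subset)
    define m where "m = card V"
    have "real ((2 * b)^8) \<le> real m" using V m_def by simp
    hence m8: "(2 * b)^8 \<le> m" by linarith
    have "(2::nat)^64 = (2^8)^8" by simp
    also have "... \<le> (2 * b)^8" using b128 by (intro power_mono) auto
    finally have m64: "2^64 \<le> m" using m8 by linarith
    have exH: "\<exists>H. m < 2^(8 * H + 8)"
    proof
      have "m < 2^m" by (rule less_exp)
      also have "... \<le> 2^(8 * m + 8)" by (rule power_increasing) auto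
      finally show "m < 2^(8 * m + 8)" .
    qed
    define H where "H = (LEAST H. m < 2^(8 * H + 8))"
    have Hu: "m < 2^(8 * H + 8)" unfolding H_def by (rule LeastI_ex[OF exH])
    have H8: "8 \<le> H"
    proof -
      have "(2::nat)^64 < 2^(8 * H + 8)" using m64 Hu by linarith
      hence "64 < 8 * H + 8" by (rule power_less_imp_less_exp[rotated]) simp
      thus ?thesis by linarith
    qed
    have Hl: "2^(8 * H) \<le> m"
    proof -
      have "H - 1 < H" using H8 by simp
      hence "\<not> m < 2^(8 * (H - 1) + 8)" unfolding H_def by (rule not_less_Least)
      moreover have "8 * (H - 1) + 8 = 8 * H" using H8 by simp
      ultimately show ?thesis by simp
    qed
    have bH: "b < 2^H"
    proof -
      have e1: "(2::nat)^((H + 1) * 8) = (2^(H + 1))^8" by (rule power_mult)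
      have e2: "(H + 1) * 8 = 8 * H + 8" by simp
      have "(2 * b)^8 < (2^(H + 1))^8"
        using m8 Hu e1 unfolding e2 by linarith
      hence "2 * b < 2^(H+1)" by (rule power_less_imp_less_base) simp
      thus ?thesis by simp
    qed
    define w where "w = (b * H + 23) div 24"
    have "w \<le> pmw (BG b N) V"
    proof (rule pmw_ge[OF simple_BG finV])
      fix vs assume vs: "distinct vs" "set vs = V"
      obtain j A f where jA: "j \<le> length vs" "pairing (BG b N) (set (take j vs)) A f" "b * H \<le> 24 * card A"
        using core[OF b2 N_def _ _ _ bH, of vs] VB vs Hl H8 m_def by auto
      have "w \<le> card A" using jA(3) unfolding w_def by linarith
      thus "\<exists>j\<le>length vs. \<exists>A f. pairing (BG b N) (set (take j vs)) A f \<and> w \<le> card A" using jA by blast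
    qed
    hence pw: "real w \<le> real (pmw G V)" using Gn N_def by simp
    have "b * H \<le> 24 * w" unfolding w_def by presburger
    hence w24: "real b * real H \<le> 24 * real w" by (metis of_nat_le_iff of_nat_mult of_nat_numeral)
    have mpos: "0 < real m" using m64 by simp
    have "log 2 (real m) < log 2 (2^(8 * H + 8))"
    proof (rule log_less)
      show "real m < 2^(8 * H + 8)" using Hu by (metis of_nat_less_iff of_nat_numeral of_nat_power)
    qed (use mpos in auto)
    hence lg: "log 2 (real m) \<le> 9 * real H" using H8 by simp
    have "real (2 * b) * log 2 (real m) \<le> real (2 * b) * (9 * real H)"
      using lg by (intro mult_left_mono) auto
    hence "real (2 * b) * log 2 (real m) / 432 \<le> real b * real H / 24" by (simp add: algebra_simps)
    also have "... \<le> real w" using w24 by simp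
    also have "... \<le> real (pmw G V)" using pw .
    finally show "real (2 * b) * log 2 (real (card V)) / 432 \<le> real (pmw G V)" using m_def by simp
  qed
qed

theorem theorem2:
  shows "\<exists>c0 c1 c2 :: real. c0 \<ge> 1 \<and> c1 \<ge> 1 \<and> c2 \<ge> 1 \<and>
    (\<exists>K :: nat set. infinite K \<and> (\<forall>k\<in>K. real k \<ge> c0) \<and>
      (\<forall>k\<in>K. \<exists>\<G> :: graph set.
         (\<forall>n. \<exists>G\<in>\<G>. card (verts G) \<ge> n) \<and>
         (\<forall>G\<in>\<G>. simple_graph G \<and> treewidth G \<le> k) \<and>
         (\<forall>G\<in>\<G>. \<forall>V. V \<subseteq> verts G \<and> real (card V) \<ge> real k powr c1 \<longrightarrow>
              real (pmw G V) \<ge> real k * log 2 (real (card V)) / c2)))"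
proof -
  define K where "K = {k::nat. even k \<and> 256 \<le> k}"
  have main: "\<exists>K :: nat set. infinite K \<and> (\<forall>k\<in>K. real k \<ge> 256) \<and>
      (\<forall>k\<in>K. \<exists>\<G> :: graph set.
         (\<forall>n. \<exists>G\<in>\<G>. card (verts G) \<ge> n) \<and>
         (\<forall>G\<in>\<G>. simple_graph G \<and> treewidth G \<le> k) \<and>
         (\<forall>G\<in>\<G>. \<forall>V. V \<subseteq> verts G \<and> real (card V) \<ge> real k powr 8 \<longrightarrow>
              real (pmw G V) \<ge> real k * log 2 (real (card V)) / 432))"
  proof (intro exI[of _ K] conjI)
    show "infinite K" unfolding infinite_nat_iff_unbounded_le
    proof
      fix m show "\<exists>n\<ge>m. n \<in> K" by (intro exI[of _ "2 * m + 256"]) (auto simp: K_def)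
    qed
    show "\<forall>k\<in>K. real k \<ge> 256" unfolding K_def by auto
    show "\<forall>k\<in>K. \<exists>\<G> :: graph set.
         (\<forall>n. \<exists>G\<in>\<G>. card (verts G) \<ge> n) \<and>
         (\<forall>G\<in>\<G>. simple_graph G \<and> treewidth G \<le> k) \<and>
         (\<forall>G\<in>\<G>. \<forall>V. V \<subseteq> verts G \<and> real (card V) \<ge> real k powr 8 \<longrightarrow>
              real (pmw G V) \<ge> real k * log 2 (real (card V)) / 432)"
    proof
      fix k assume "k \<in> K"
      hence k: "k = 2 * (k div 2)" "128 \<le> k div 2" unfolding K_def by auto
      show "\<exists>\<G> :: graph set.
         (\<forall>n. \<exists>G\<in>\<G>. card (verts G) \<ge> n) \<and>
         (\<forall>G\<in>\<G>. simple_graph G \<and> treewidth G \<le> k) \<and>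
         (\<forall>G\<in>\<G>. \<forall>V. V \<subseteq> verts G \<and> real (card V) \<ge> real k powr 8 \<longrightarrow>
              real (pmw G V) \<ge> real k * log 2 (real (card V)) / 432)"
        using per_k[OF k(2)] k(1) by metis
    qed
  qed
  show ?thesis
    apply (rule exI[of _ 256], rule exI[of _ 8], rule exI[of _ 432])
    using main by simp
qed


end
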